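(* Let $G$ be a real $n\times m$ matrix and $\mathbf v\in\mathbb R^n$, and let $\mathcal G=\{x\in\mathbb R^m: Gx\le \mathbf v\}$, with the inequality understood componentwise. Let $P$ be the nonnegative orthant of $\mathbb R^n$ and $F=\mathcal R(G)$ the range of $G$. Write $\mathbf v=\mathbf v_F+\upsilon$, where $\mathbf v_F$ is the orthogonal projection of $\mathbf v$ onto $F$ and $\upsilon$ is the orthogonal projection of $\mathbf v$ onto $F^\perp$. Assume that $\upsilon\neq 0$ and that $F\cap P=\{0\}$ (strict tangency). Let $C_e=\{t\upsilon+z: t\ge 0,\ z\in F\}$. Then $$\mathcal G\neq\emptyset \iff C_e\cap P\neq\{0\},$$ or, equivalently, $\mathcal G=\emptyset\iff C_e\cap P=\{0\}$.
   Context: The condition $F\cap P=\{0\}$ says that the subspace $\mathcal R(G)$ meets the nonnegative orthant only at the origin; the paper calls this strict tangency. $C_e$ is the convex cone generated by the affine set $\upsilon+F$. *)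

theory Defs
  imports "HOL-Analysis.Analysis"
begin

definition nonneg_orthant :: "(real ^ 'n) set" where
  "nonneg_orthant = {y. \<forall>i. 0 \<le> y $ i}"

definition feasible_set :: "real ^ 'm ^ 'n \<Rightarrow> real ^ 'n \<Rightarrow> (real ^ 'm) set" where
  "feasible_set G v = {x. \<forall>i. (G *v x) $ i \<le> v $ i}"

definition cone_e :: "real ^ 'n \<Rightarrow> (real ^ 'n) set \<Rightarrow> (real ^ 'n) set" where
  "cone_e u F = {t *\<^sub>R u + z | t z. 0 \<le> t \<and> z \<in> F}"

end

theory Submission
  imports Defs
begin

theorem mainTheorem1:
  fixes G :: "real ^ 'm ^ 'n" and v vF u :: "real ^ 'n"
  assumes "vF \<in> range (\<lambda>x. G *v x)"
    and "u \<in> orthogonal_comp (range (\<lambda>x. G *v x))"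
    and "v = vF + u"
    and "u \<noteq> 0"
    and "range (\<lambda>x. G *v x) \<inter> nonneg_orthant = {0}"
  shows "feasible_set G v \<noteq> {} \<longleftrightarrow>
         cone_e u (range (\<lambda>x. G *v x)) \<inter> nonneg_orthant \<noteq> {0}"
proof -
  obtain a where a: "vF = G *v a" using assms(1) by auto
  have orth: "\<And>b. u \<bullet> (G *v b) = 0"
    using assms(2) by (auto simp: orthogonal_comp_def orthogonal_def inner_commute)
  have zero_in: "0 \<in> cone_e u (range (\<lambda>x. G *v x)) \<inter> nonneg_orthant"
    unfolding cone_e_def nonneg_orthant_def
    by (auto intro!: exI[of _ 0] exI[of _ "0::real^'n"] image_eqI[of _ _ "0::real^'m"])
  show ?thesis
  proof
    assume "feasible_set G v \<noteq> {}"
    then obtain x where x: "\<And>i. (G *v x) $ i \<le> v $ i"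
      unfolding feasible_set_def by auto
    define y where "y = 1 *\<^sub>R u + G *v (a - x)"
    have y1: "y \<in> cone_e u (range (\<lambda>x. G *v x))"
      unfolding cone_e_def y_def
      by (rule CollectI, rule exI[of _ 1], rule exI[of _ "G *v (a - x)"]) auto
    have yv: "y = v - G *v x"
      using a assms(3) by (simp add: y_def matrix_vector_mult_diff_distrib)
    have y2: "y \<in> nonneg_orthant"
      unfolding nonneg_orthant_def yv using x by simp
    have "y \<noteq> 0"
    proof
      assume "y = 0"
      then have "u = - (G *v (a - x))" by (simp add: y_def add_eq_0_iff)
      then have "u = G *v (x - a)" by (simp add: matrix_vector_mult_diff_distrib)
      then have "u \<bullet> u = 0" using orth by metis
      then show False using assms(4) by simp
    qed
    then show "cone_e u (range (\<lambda>x. G *v x)) \<inter> nonneg_orthant \<noteq> {0}"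
      using y1 y2 by blast
  next
    assume "cone_e u (range (\<lambda>x. G *v x)) \<inter> nonneg_orthant \<noteq> {0}"
    then obtain y where y: "y \<in> cone_e u (range (\<lambda>x. G *v x))" "y \<in> nonneg_orthant" "y \<noteq> 0"
      using zero_in by blast
    then obtain t b where tb: "y = t *\<^sub>R u + G *v b" "0 \<le> t"
      unfolding cone_e_def by auto
    have "t \<noteq> 0"
    proof
      assume "t = 0"
      then have "G *v b \<in> range (\<lambda>x. G *v x) \<inter> nonneg_orthant" using tb y by auto
      then have "G *v b = 0" using assms(5) by blast
      then show False using tb y \<open>t = 0\<close> by simp
    qed
    with tb have tpos: "t > 0" by simp
    define x where "x = a - (1/t) *\<^sub>R b"
    have "v - G *v x = (1/t) *\<^sub>R y"
      using a assms(3) tpos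
      by (simp add: x_def tb matrix_vector_mult_diff_distrib matrix_vector_mult_scaleR algebra_simps)
    then have "\<And>i. (G *v x) $ i \<le> v $ i"
    proof -
      fix i
      assume h: "v - G *v x = (1/t) *\<^sub>R y"
      have "0 \<le> y $ i" using y(2) unfolding nonneg_orthant_def by auto
      then have "0 \<le> ((1/t) *\<^sub>R y) $ i" using tpos by simp
      then have "0 \<le> (v - G *v x) $ i" using h by simp
      then show "(G *v x) $ i \<le> v $ i" by simp
    qed
    then show "feasible_set G v \<noteq> {}" unfolding feasible_set_def by blast
  qed
qed

end
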